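(* For every forward trie $\mathsf{T}_f$ with $n$ nodes over an alphabet of size $\sigma$, the minimal deterministic finite automaton accepting $\mathrm{Suffix}(\mathsf{T}_f)$ has $O(\sigma n)$ transitions. Moreover, for some forward tries $\mathsf{T}_f$ with $n$ nodes, this minimal DFA has $\Omega(\sigma n)$ transitions, which is $\Omega(n^2)$ for an alphabet of size $\sigma=\Theta(n)$. The same upper and lower bounds hold for the minimal DFA accepting $\mathrm{Substr}(\mathsf{T}_f)$.
   Context: An alphabet $\Sigma$ is a finite ordered set of characters, and $\sigma=|\Sigma|$. A forward trie $\mathsf{T}_f$ is a rooted tree with $n$ nodes in which every edge is directed from parent to child and labeled by a single character of $\Sigma$, such that the edges leaving any node carry pairwise distinct labels. For nodes $u,v$ with $u$ an ancestor of $v$ (possibly $u=v$), $\mathrm{str}_f(u,v)$ is the string of labels read along the downward path from $u$ to $v$. Define $\mathrm{Substr}(\mathsf{T}_f)=\{\mathrm{str}_f(u,v): u \text{ an ancestor of } v\}$ and $\mathrm{Suffix}(\mathsf{T}_f)=\{\mathrm{str}_f(u,\ell): \ell \text{ a leaf},\ u \text{ an ancestor of } \ell\}$. DFAs are partial (transitions to a dead state are not counted). *)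

theory Defs
  imports Complex_Main
begin

text \<open>A forward trie over alphabet Alph: finite node set V, root r, parent function par
  (meaningful on V - {r}), and label function lab: the edge from par v to v carries lab v.\<close>

definition is_trie :: "'a set \<Rightarrow> 'v set \<Rightarrow> 'v \<Rightarrow> ('v \<Rightarrow> 'v) \<Rightarrow> ('v \<Rightarrow> 'a) \<Rightarrow> bool" where
  "is_trie Alph V r par lab \<longleftrightarrow>
     finite V \<and> r \<in> V \<and>
     (\<forall>v\<in>V. v \<noteq> r \<longrightarrow> par v \<in> V \<and> lab v \<in> Alph) \<and>
     (\<forall>v\<in>V. \<exists>k. (par ^^ k) v = r) \<and>
     (\<forall>v\<in>V - {r}. \<forall>w\<in>V - {r}. par v = par w \<and> lab v = lab w \<longrightarrow> v = w)"

text \<open>tpath V r par lab u v s: u is an ancestor of v (or u = v) and s = str_f(u,v).\<close>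
inductive tpath :: "'v set \<Rightarrow> 'v \<Rightarrow> ('v \<Rightarrow> 'v) \<Rightarrow> ('v \<Rightarrow> 'a) \<Rightarrow> 'v \<Rightarrow> 'v \<Rightarrow> 'a list \<Rightarrow> bool"
  for V r par lab where
  refl: "u \<in> V \<Longrightarrow> tpath V r par lab u u []"
| step: "tpath V r par lab u (par v) s \<Longrightarrow> v \<in> V \<Longrightarrow> v \<noteq> r \<Longrightarrow> tpath V r par lab u v (s @ [lab v])"

definition is_leaf :: "'v set \<Rightarrow> 'v \<Rightarrow> ('v \<Rightarrow> 'v) \<Rightarrow> 'v \<Rightarrow> bool" where
  "is_leaf V r par l \<longleftrightarrow> l \<in> V \<and> \<not> (\<exists>w\<in>V. w \<noteq> r \<and> par w = l)"

definition Substr :: "'v set \<Rightarrow> 'v \<Rightarrow> ('v \<Rightarrow> 'v) \<Rightarrow> ('v \<Rightarrow> 'a) \<Rightarrow> 'a list set" where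
  "Substr V r par lab = {s. \<exists>u v. tpath V r par lab u v s}"

definition Suffix :: "'v set \<Rightarrow> 'v \<Rightarrow> ('v \<Rightarrow> 'v) \<Rightarrow> ('v \<Rightarrow> 'a) \<Rightarrow> 'a list set" where
  "Suffix V r par lab = {s. \<exists>u l. is_leaf V r par l \<and> tpath V r par lab u l s}"

record 'a dfa =
  states :: "nat set"
  init :: nat
  delta :: "nat \<Rightarrow> 'a \<Rightarrow> nat option"
  finals :: "nat set"

definition is_dfa :: "'a set \<Rightarrow> 'a dfa \<Rightarrow> bool" where
  "is_dfa Alph M \<longleftrightarrow> finite (states M) \<and> init M \<in> states M \<and> finals M \<subseteq> states M \<and>
     (\<forall>q\<in>states M. \<forall>a q'. delta M q a = Some q' \<longrightarrow> a \<in> Alph \<and> q' \<in> states M)"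

fun delta_star :: "'a dfa \<Rightarrow> nat \<Rightarrow> 'a list \<Rightarrow> nat option" where
  "delta_star M q [] = Some q"
| "delta_star M q (a # w) = (case delta M q a of None \<Rightarrow> None | Some q' \<Rightarrow> delta_star M q' w)"

definition dfa_lang :: "'a dfa \<Rightarrow> 'a list set" where
  "dfa_lang M = {w. \<exists>q. delta_star M (init M) w = Some q \<and> q \<in> finals M}"

definition ntrans :: "'a dfa \<Rightarrow> nat" where
  "ntrans M = card {(q, a). q \<in> states M \<and> delta M q a \<noteq> None}"

definition minimal_dfa :: "'a set \<Rightarrow> 'a list set \<Rightarrow> 'a dfa \<Rightarrow> bool" where
  "minimal_dfa Alph L M \<longleftrightarrow> is_dfa Alph M \<and> dfa_lang M = L \<and>
     (\<forall>M'. is_dfa Alph M' \<and> dfa_lang M' = L \<longrightarrow> card (states M) \<le> card (states M'))"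

end

theory Submission
  imports Defs "HOL-Library.Countable_Set"
begin


lemma tpath_V: "tpath V r par lab u v s \<Longrightarrow> u \<in> V \<and> v \<in> V"
  by (induction rule: tpath.induct) auto

lemma tpath_append1: "tpath V r par lab v w y \<Longrightarrow> tpath V r par lab u v x \<Longrightarrow> tpath V r par lab u w (x@y)"
proof (induction rule: tpath.induct)
  case (refl u) then show ?case by simp
next
  case (step u' v s)
  then have "tpath V r par lab u (par v) (x@s)" by simp
  then have "tpath V r par lab u v ((x@s)@[lab v])" using step by (intro tpath.step)
  then show ?case by simp
qed

lemma tpath_append2: "tpath V r par lab u w z \<Longrightarrow> z = x@y \<Longrightarrow> \<exists>v. tpath V r par lab u v x \<and> tpath V r par lab v w y"
proof (induction arbitrary: y rule: tpath.induct)
  case (refl u) then show ?case by (auto intro: tpath.refl)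
next
  case (step u v s)
  show ?case
  proof (cases y rule: rev_cases)
    case Nil
    then have "x = s@[lab v]" using step.prems by simp
    have "tpath V r par lab u v (s@[lab v])" using step.hyps by (intro tpath.step)
    moreover have "tpath V r par lab v v []" using step.hyps by (intro tpath.refl)
    ultimately show ?thesis using \<open>x = s@[lab v]\<close> Nil by blast
  next
    case (snoc y' a)
    then have "s = x@y'" "a = lab v" using step.prems by auto
    then obtain v' where "tpath V r par lab u v' x" "tpath V r par lab v' (par v) y'" using step.IH by blast
    then show ?thesis using step snoc \<open>a = lab v\<close> by (auto intro: tpath.step)
  qed
qed

lemma tpath_snoc_inv: "tpath V r par lab u v (s@[a]) \<Longrightarrow> v \<noteq> r \<and> v \<in> V \<and> lab v = a \<and> tpath V r par lab u (par v) s"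
  by (cases rule: tpath.cases) auto

lemma tpath_suffix: "tpath V r par lab u1 v x \<Longrightarrow> tpath V r par lab u2 v y \<Longrightarrow> length x \<le> length y \<Longrightarrow> \<exists>z. y = z@x"
proof (induction arbitrary: u2 y rule: tpath.induct)
  case refl thus ?case by simp
next
  case (step u v s)
  from step.prems(2) have "y \<noteq> []" by auto
  then obtain y' b where yb: "y = y'@[b]" by (cases y rule: rev_cases) auto
  with step.prems tpath_snoc_inv[of V r par lab u2 v y' b] have y: "y = y'@[lab v]" "tpath V r par lab u2 (par v) y'"
    by auto
  have "length s \<le> length y'" using step.prems(2) y(1) by simp
  then obtain z where "y' = z@s" using step.IH[OF y(2)] by blast
  thus ?case using y by auto
qed

lemma tpath_lists: "tpath V r par lab u v s \<Longrightarrow> is_trie Alph V r par lab \<Longrightarrow> s \<in> lists Alph"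
  by (induction rule: tpath.induct) (auto simp: is_trie_def)




lemma laminar_card:
  assumes "finite V" "\<forall>S\<in>F. S \<subseteq> V \<and> S \<noteq> {}" "\<forall>S\<in>F. \<forall>T\<in>F. S \<inter> T = {} \<or> S \<subseteq> T \<or> T \<subseteq> S"
  shows "card F \<le> 2 * card V"
  using assms
proof (induction V arbitrary: F rule: finite_induct)
  case empty
  then have "F = {}" by auto
  then show ?case by simp
next
  case (insert x V)
  define g where "g = (\<lambda>S::'a set. S - {x})"
  define F' where "F' = g ` F - {{}}"
  have "F \<subseteq> Pow (insert x V)" using insert.prems(1) by blast
  then have finF: "finite F" using insert.hyps(1) by (meson finite_Pow_iff finite_insert finite_subset)
  have "\<forall>S\<in>F'. S \<subseteq> V \<and> S \<noteq> {}" using insert.prems(1) unfolding F'_def g_def by auto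
  moreover have "\<forall>S\<in>F'. \<forall>T\<in>F'. S \<inter> T = {} \<or> S \<subseteq> T \<or> T \<subseteq> S"
  proof (intro ballI)
    fix S T assume "S \<in> F'" "T \<in> F'"
    then obtain S0 T0 where "S0 \<in> F" "T0 \<in> F" "S = S0 - {x}" "T = T0 - {x}" unfolding F'_def g_def by auto
    moreover have "S0 \<inter> T0 = {} \<or> S0 \<subseteq> T0 \<or> T0 \<subseteq> S0" using insert.prems(2) \<open>S0 \<in> F\<close> \<open>T0 \<in> F\<close> by blast
    ultimately show "S \<inter> T = {} \<or> S \<subseteq> T \<or> T \<subseteq> S" by blast
  qed
  ultimately have IH: "card F' \<le> 2 * card V" by (rule insert.IH)
  define A where "A = {S\<in>F. x \<notin> S}"
  define B where "B = {S\<in>F. x \<in> S}"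
  have finA: "finite A" and finB: "finite B" using finF unfolding A_def B_def by auto
  have F: "F = A \<union> B" "A \<inter> B = {}" unfolding A_def B_def by auto
  have cF: "card F = card A + card B" using card_Un_disjoint[OF finA finB F(2)] F(1) by simp
  have gA: "g ` A = A" unfolding A_def g_def by auto
  have gF: "g ` F = A \<union> g ` B" using F gA by (metis image_Un)
  have injB: "inj_on g B" unfolding inj_on_def B_def g_def by auto
  have cgB: "card (g ` B) = card B" by (rule card_image[OF injB])
  have one: "card (A \<inter> g ` B) \<le> 1"
  proof -
    have "\<forall>T1\<in>A \<inter> g ` B. \<forall>T2\<in>A \<inter> g ` B. T1 = T2"
    proof (intro ballI)
      fix T1 T2 assume T1: "T1 \<in> A \<inter> g ` B" and T2: "T2 \<in> A \<inter> g ` B"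
      then obtain S1 S2 where S: "S1 \<in> B" "S2 \<in> B" "T1 = S1 - {x}" "T2 = S2 - {x}" unfolding g_def by auto
      have ne: "T1 \<noteq> {}" "T2 \<noteq> {}" "T1 \<in> F" "T2 \<in> F" "x \<notin> T1" "x \<notin> T2"
        using T1 T2 insert.prems(1) unfolding A_def by auto
      have SF: "S1 \<in> F" "S2 \<in> F" "x \<in> S1" "x \<in> S2" using S unfolding B_def by auto
      have lam: "\<And>S T. S \<in> F \<Longrightarrow> T \<in> F \<Longrightarrow> S \<inter> T = {} \<or> S \<subseteq> T \<or> T \<subseteq> S"
        using insert.prems(2) by blast
      have key: "\<And>S1 S2 T1 T2. S1 \<in> F \<Longrightarrow> T2 \<in> F \<Longrightarrow> x \<in> S1 \<Longrightarrow> x \<notin> T2 \<Longrightarrow> T1 \<noteq> {} \<Longrightarrow>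
           S1 \<subseteq> S2 \<Longrightarrow> T1 = S1 - {x} \<Longrightarrow> T2 = S2 - {x} \<Longrightarrow> T1 = T2"
      proof -
        fix S1 S2 T1 T2 assume a: "S1 \<in> F" "T2 \<in> F" "x \<in> S1" "x \<notin> T2" "T1 \<noteq> {}"
          "S1 \<subseteq> S2" "T1 = S1 - {x}" "T2 = S2 - {x}"
        have "S1 \<inter> T2 \<noteq> {}" using a by blast
        then have "S1 \<subseteq> T2 \<or> T2 \<subseteq> S1" using lam[OF a(1) a(2)] by blast
        then show "T1 = T2" using a by blast
      qed
      from lam[OF SF(1) SF(2)] SF have "S1 \<subseteq> S2 \<or> S2 \<subseteq> S1" by blast
      then show "T1 = T2"
      proof
        assume h: "S1 \<subseteq> S2" show ?thesis by (rule key[OF SF(1) ne(4) SF(3) ne(6) ne(1) h S(3) S(4)])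
      next
        assume h: "S2 \<subseteq> S1" show ?thesis using key[OF SF(2) ne(3) SF(4) ne(5) ne(2) h S(4) S(3)] by simp
      qed
    qed
    moreover have "finite (A \<inter> g ` B)" using finA by simp
    ultimately show ?thesis using card_le_Suc0_iff_eq[of "A \<inter> g ` B"] by simp
  qed
  have "card A + card (g ` B) = card (A \<union> g ` B) + card (A \<inter> g ` B)"
    by (rule card_Un_Int[OF finA finite_imageI[OF finB]])
  moreover have "card (g ` F) = card (A \<union> g ` B)" using gF by simp
  ultimately have c1: "card A + card B \<le> card (g ` F) + 1" using cgB one by linarith
  have "card (g ` F) \<le> card F' + 1"
  proof -
    have fF': "finite F'" using finF by (simp add: F'_def)
    have "g ` F \<subseteq> insert {} F'" unfolding F'_def by auto
    then have "card (g ` F) \<le> card (insert {} F')" using fF' by (intro card_mono) auto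
    also have "card (insert {} F') \<le> card F' + 1" using fF' by (simp add: card_insert_if)
    finally show ?thesis .
  qed
  then show ?case using cF c1 IH insert.hyps by simp
qed



definition Dq :: "'a list set \<Rightarrow> 'a list \<Rightarrow> 'a list set" where
  "Dq L x = {y. x @ y \<in> L}"

definition NQ :: "'a list set \<Rightarrow> 'a list set set" where
  "NQ L = {Dq L x | x. Dq L x \<noteq> {} \<or> x = []}"

definition mkdfa :: "'a set \<Rightarrow> 'a list set \<Rightarrow> 'a dfa" where
  "mkdfa Alph L = \<lparr>states = to_nat_on (NQ L) ` NQ L, init = to_nat_on (NQ L) L,
     delta = (\<lambda>n a. if a \<in> Alph \<and> Dq (from_nat_into (NQ L) n) [a] \<noteq> {}
                     then Some (to_nat_on (NQ L) (Dq (from_nat_into (NQ L) n) [a])) else None),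
     finals = to_nat_on (NQ L) ` {K\<in>NQ L. [] \<in> K}\<rparr>"

lemma Dq_Nil[simp]: "Dq L [] = L" by (simp add: Dq_def)
lemma Dq_Dq[simp]: "Dq (Dq L x) y = Dq L (x @ y)" by (simp add: Dq_def)

lemma L_in_NQ: "L \<in> NQ L"
  unfolding NQ_def by (rule CollectI, rule exI[of _ "[]"]) simp

lemma NQ_step: "K \<in> NQ L \<Longrightarrow> Dq K w \<noteq> {} \<Longrightarrow> Dq K w \<in> NQ L"
proof -
  assume K: "K \<in> NQ L" and ne: "Dq K w \<noteq> {}"
  from K obtain x where "K = Dq L x" unfolding NQ_def by blast
  then have "Dq K w = Dq L (x @ w)" by simp
  then show ?thesis using ne unfolding NQ_def by blast
qed

lemma Dq_Cons_empty: "Dq K [a] = {} \<Longrightarrow> Dq K (a # w) = {}"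
  unfolding Dq_def by (metis (no_types, lifting) append_Cons append_Nil empty_Collect_eq)

lemma mkdfa_star:
  assumes fin: "finite (NQ L)" and K: "K \<in> NQ L" "K \<noteq> {}"
  shows "delta_star (mkdfa Alph L) (to_nat_on (NQ L) K) w =
    (if w \<in> lists Alph \<and> Dq K w \<noteq> {} then Some (to_nat_on (NQ L) (Dq K w)) else None)"
  using K
proof (induction w arbitrary: K)
  case Nil then show ?case by simp
next
  case (Cons a w)
  have c: "countable (NQ L)" using fin by (rule countable_finite)
  have fr: "from_nat_into (NQ L) (to_nat_on (NQ L) K) = K" using c Cons.prems by simp
  show ?case
  proof (cases "a \<in> Alph \<and> Dq K [a] \<noteq> {}")
    case True
    then have K': "Dq K [a] \<in> NQ L" using NQ_step Cons.prems by blast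
    have "delta (mkdfa Alph L) (to_nat_on (NQ L) K) a = Some (to_nat_on (NQ L) (Dq K [a]))"
      using True fr by (simp add: mkdfa_def)
    then have "delta_star (mkdfa Alph L) (to_nat_on (NQ L) K) (a # w) =
          delta_star (mkdfa Alph L) (to_nat_on (NQ L) (Dq K [a])) w"
      by simp
    also have "\<dots> = (if w \<in> lists Alph \<and> Dq (Dq K [a]) w \<noteq> {} then Some (to_nat_on (NQ L) (Dq (Dq K [a]) w)) else None)"
      using Cons.IH[OF K'] True by simp
    finally show ?thesis using True by simp
  next
    case False
    then have "delta (mkdfa Alph L) (to_nat_on (NQ L) K) a = None"
      using fr by (simp add: mkdfa_def)
    then have "delta_star (mkdfa Alph L) (to_nat_on (NQ L) K) (a # w) = None"
      by simp
    moreover have "\<not> (a # w \<in> lists Alph \<and> Dq K (a # w) \<noteq> {})"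
    proof
      assume h: "a # w \<in> lists Alph \<and> Dq K (a # w) \<noteq> {}"
      have "Dq K [a] \<noteq> {}"
      proof
        assume "Dq K [a] = {}"
        then have "Dq K (a # w) = {}" by (rule Dq_Cons_empty)
        with h show False by simp
      qed
      moreover have "a \<in> Alph" using h by simp
      ultimately show False using False by simp
    qed
    ultimately show ?thesis by simp
  qed
qed


lemma mkdfa_ok:
  assumes fin: "finite (NQ L)" and LA: "L \<subseteq> lists Alph"
  shows "is_dfa Alph (mkdfa Alph L) \<and> dfa_lang (mkdfa Alph L) = L \<and> card (states (mkdfa Alph L)) = card (NQ L)"
proof -
  have c: "countable (NQ L)" using fin by (rule countable_finite)
  have inj: "inj_on (to_nat_on (NQ L)) (NQ L)" using c by (rule inj_on_to_nat_on)
  have d4: "\<forall>q\<in>states (mkdfa Alph L). \<forall>a q'. delta (mkdfa Alph L) q a = Some q' \<longrightarrow> a \<in> Alph \<and> q' \<in> states (mkdfa Alph L)"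
  proof (intro ballI allI impI)
    fix q a q' assume q: "q \<in> states (mkdfa Alph L)" and d: "delta (mkdfa Alph L) q a = Some q'"
    from q obtain K where K: "K \<in> NQ L" "q = to_nat_on (NQ L) K" by (auto simp: mkdfa_def)
    then have fr: "from_nat_into (NQ L) q = K" using c by simp
    from d fr have "a \<in> Alph" "Dq K [a] \<noteq> {}" "q' = to_nat_on (NQ L) (Dq K [a])"
      by (auto simp: mkdfa_def split: if_splits)
    then show "a \<in> Alph \<and> q' \<in> states (mkdfa Alph L)"
      using NQ_step[OF K(1)] by (auto simp: mkdfa_def)
  qed
  have "finite (states (mkdfa Alph L))" using fin by (simp add: mkdfa_def)
  moreover have "init (mkdfa Alph L) \<in> states (mkdfa Alph L)" using L_in_NQ[of L] by (simp add: mkdfa_def)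
  moreover have "finals (mkdfa Alph L) \<subseteq> states (mkdfa Alph L)" by (auto simp: mkdfa_def)
  ultimately have dfa: "is_dfa Alph (mkdfa Alph L)" using d4 unfolding is_dfa_def by blast
  have lang: "dfa_lang (mkdfa Alph L) = L"
  proof (cases "L = {}")
    case True
    then have "NQ L = {{}}" unfolding NQ_def by (auto simp: Dq_def)
    then show ?thesis using True by (auto simp: dfa_lang_def mkdfa_def)
  next
    case False
    show ?thesis
    proof (intro set_eqI iffI)
      fix w assume "w \<in> dfa_lang (mkdfa Alph L)"
      then obtain q where q: "delta_star (mkdfa Alph L) (init (mkdfa Alph L)) w = Some q" "q \<in> finals (mkdfa Alph L)"
        by (auto simp: dfa_lang_def)
      have "delta_star (mkdfa Alph L) (to_nat_on (NQ L) L) w =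
          (if w \<in> lists Alph \<and> Dq L w \<noteq> {} then Some (to_nat_on (NQ L) (Dq L w)) else None)"
        by (rule mkdfa_star[OF fin L_in_NQ False])
      with q have q1: "Dq L w \<noteq> {}" "q = to_nat_on (NQ L) (Dq L w)"
        by (auto simp: mkdfa_def split: if_splits)
      have inQ: "Dq L w \<in> NQ L" using NQ_step[OF L_in_NQ q1(1)] by simp
      from q(2) q1(2) obtain K where "K \<in> NQ L" "[] \<in> K" "to_nat_on (NQ L) (Dq L w) = to_nat_on (NQ L) K"
        by (auto simp: mkdfa_def)
      then have "Dq L w = K" using inj inQ by (meson inj_on_eq_iff)
      then show "w \<in> L" using \<open>[] \<in> K\<close> by (auto simp: Dq_def)
    next
      fix w assume w: "w \<in> L"
      then have "w \<in> lists Alph" using LA by blast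
      moreover have ne: "Dq L w \<noteq> {}" using w unfolding Dq_def by (metis (no_types, lifting) append_Nil2 empty_Collect_eq)
      ultimately have "delta_star (mkdfa Alph L) (init (mkdfa Alph L)) w = Some (to_nat_on (NQ L) (Dq L w))"
        using mkdfa_star[OF fin L_in_NQ False] by (simp add: mkdfa_def)
      moreover have "to_nat_on (NQ L) (Dq L w) \<in> finals (mkdfa Alph L)"
        using NQ_step[OF L_in_NQ ne] w by (auto simp: mkdfa_def Dq_def)
      ultimately show "w \<in> dfa_lang (mkdfa Alph L)" by (auto simp: dfa_lang_def)
    qed
  qed
  have "card (states (mkdfa Alph L)) = card (NQ L)"
    using card_image[OF inj] by (simp add: mkdfa_def)
  then show ?thesis using dfa lang by blast
qed


lemma exists_minimal:
  assumes "is_dfa Alph M0" "dfa_lang M0 = L"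
  shows "\<exists>M. minimal_dfa Alph L M"
proof -
  define P where "P = (\<lambda>k. \<exists>M. is_dfa Alph M \<and> dfa_lang M = L \<and> card (states M) = k)"
  have "P (card (states M0))" using assms unfolding P_def by blast
  then have "P (Least P)" by (rule LeastI)
  then obtain M where M: "is_dfa Alph M" "dfa_lang M = L" "card (states M) = Least P" unfolding P_def by blast
  have "\<forall>M'. is_dfa Alph M' \<and> dfa_lang M' = L \<longrightarrow> card (states M) \<le> card (states M')"
  proof (intro allI impI)
    fix M' assume "is_dfa Alph M' \<and> dfa_lang M' = L"
    then have "P (card (states M'))" unfolding P_def by blast
    then have "Least P \<le> card (states M')" by (rule Least_le)
    then show "card (states M) \<le> card (states M')" using M(3) by simp
  qed
  then show ?thesis using M unfolding minimal_dfa_def by blast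
qed

lemma ntrans_upper:
  assumes "is_dfa Alph M" "finite Alph"
  shows "ntrans M \<le> card (states M) * card Alph"
proof -
  have "{(q, a). q \<in> states M \<and> delta M q a \<noteq> None} \<subseteq> states M \<times> Alph"
    using assms(1) unfolding is_dfa_def by auto
  moreover have "finite (states M \<times> Alph)" using assms unfolding is_dfa_def by simp
  ultimately have "ntrans M \<le> card (states M \<times> Alph)" unfolding ntrans_def by (rule card_mono[rotated])
  then show ?thesis by (simp add: card_cartesian_product)
qed



definition Lp :: "'v set \<Rightarrow> 'v \<Rightarrow> ('v \<Rightarrow> 'v) \<Rightarrow> ('v \<Rightarrow> 'a) \<Rightarrow> ('v \<Rightarrow> bool) \<Rightarrow> 'a list set" where
  "Lp V r par lab P = {s. \<exists>u w. tpath V r par lab u w s \<and> P w}"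

definition Eset :: "'v set \<Rightarrow> 'v \<Rightarrow> ('v \<Rightarrow> 'v) \<Rightarrow> ('v \<Rightarrow> 'a) \<Rightarrow> 'a list \<Rightarrow> 'v set" where
  "Eset V r par lab x = {v. \<exists>u. tpath V r par lab u v x}"

definition Rs :: "'v set \<Rightarrow> 'v \<Rightarrow> ('v \<Rightarrow> 'v) \<Rightarrow> ('v \<Rightarrow> 'a) \<Rightarrow> ('v \<Rightarrow> bool) \<Rightarrow> 'v set \<Rightarrow> 'a list set" where
  "Rs V r par lab P S = {y. \<exists>v\<in>S. \<exists>w. tpath V r par lab v w y \<and> P w}"

lemma Substr_Lp: "Substr V r par lab = Lp V r par lab (\<lambda>_. True)"
  unfolding Substr_def Lp_def by simp

lemma Suffix_Lp: "Suffix V r par lab = Lp V r par lab (is_leaf V r par)"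
  unfolding Suffix_def Lp_def by (intro Collect_cong) blast

lemma Dq_Lp: "Dq (Lp V r par lab P) x = Rs V r par lab P (Eset V r par lab x)"
proof (intro set_eqI iffI)
  fix y assume "y \<in> Dq (Lp V r par lab P) x"
  then obtain u w where h: "tpath V r par lab u w (x @ y)" "P w" unfolding Dq_def Lp_def by blast
  obtain v where "tpath V r par lab u v x" "tpath V r par lab v w y" using tpath_append2[OF h(1) HOL.refl] by blast
  then show "y \<in> Rs V r par lab P (Eset V r par lab x)" unfolding Rs_def Eset_def using \<open>P w\<close> by blast
next
  fix y assume "y \<in> Rs V r par lab P (Eset V r par lab x)"
  then obtain u v w where h: "tpath V r par lab u v x" "tpath V r par lab v w y" "P w" unfolding Rs_def Eset_def by blast
  have "tpath V r par lab u w (x @ y)" by (rule tpath_append1[OF h(2) h(1)])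
  then show "y \<in> Dq (Lp V r par lab P) x" unfolding Dq_def Lp_def using \<open>P w\<close> by blast
qed

lemma Eset_sub: "Eset V r par lab x \<subseteq> V"
proof
  fix v assume "v \<in> Eset V r par lab x"
  then obtain u where "tpath V r par lab u v x" unfolding Eset_def by blast
  then show "v \<in> V" using tpath_V by metis
qed

lemma Eset_laminar:
  "Eset V r par lab x \<inter> Eset V r par lab y = {} \<or> Eset V r par lab x \<subseteq> Eset V r par lab y \<or> Eset V r par lab y \<subseteq> Eset V r par lab x"
proof -
  have key: "Eset V r par lab y \<subseteq> Eset V r par lab x"
    if h: "v \<in> Eset V r par lab x" "v \<in> Eset V r par lab y" "length x \<le> length y" for x y v
  proof -
    from h(1) obtain u1 where t1: "tpath V r par lab u1 v x" unfolding Eset_def by blast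
    from h(2) obtain u2 where t2: "tpath V r par lab u2 v y" unfolding Eset_def by blast
    obtain z where z: "y = z @ x" using tpath_suffix[OF t1 t2 h(3)] by blast
    show ?thesis
    proof
      fix v' assume "v' \<in> Eset V r par lab y"
      then obtain u where h: "tpath V r par lab u v' (z @ x)" unfolding Eset_def using z by blast
      obtain w where "tpath V r par lab w v' x" using tpath_append2[OF h HOL.refl] by blast
      then show "v' \<in> Eset V r par lab x" unfolding Eset_def by blast
    qed
  qed
  show ?thesis
  proof (cases "Eset V r par lab x \<inter> Eset V r par lab y = {}")
    case False
    then obtain v where "v \<in> Eset V r par lab x" "v \<in> Eset V r par lab y" by blast
    then have v: "v \<in> Eset V r par lab x" "v \<in> Eset V r par lab y" .
    show ?thesis
    proof (cases "length x \<le> length y")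
      case True then show ?thesis using key[OF v True] by blast
    next
      case False then have "length y \<le> length x" by simp
      then show ?thesis using key[OF v(2) v(1)] by blast
    qed
  qed simp
qed

lemma NQ_bound:
  assumes "finite V"
  shows "finite (NQ (Lp V r par lab P)) \<and> card (NQ (Lp V r par lab P)) \<le> 2 * card V + 1"
proof -
  define F where "F = {Eset V r par lab x | x. Eset V r par lab x \<noteq> {}}"
  have F1: "\<forall>S\<in>F. S \<subseteq> V \<and> S \<noteq> {}"
  proof
    fix S assume "S \<in> F"
    then obtain x where "S = Eset V r par lab x" "S \<noteq> {}" unfolding F_def by blast
    then show "S \<subseteq> V \<and> S \<noteq> {}" using Eset_sub[of V r par lab x] by simp
  qed
  then have FP: "F \<subseteq> Pow V" by blast
  then have finF: "finite F" using assms by (meson finite_Pow_iff finite_subset)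
  note F1
  moreover have "\<forall>S\<in>F. \<forall>T\<in>F. S \<inter> T = {} \<or> S \<subseteq> T \<or> T \<subseteq> S"
  proof (intro ballI)
    fix S T assume "S \<in> F" "T \<in> F"
    then obtain x y where "S = Eset V r par lab x" "T = Eset V r par lab y" unfolding F_def by blast
    then show "S \<inter> T = {} \<or> S \<subseteq> T \<or> T \<subseteq> S" using Eset_laminar by simp
  qed
  ultimately have cF: "card F \<le> 2 * card V" by (rule laminar_card[OF assms])
  have sub: "NQ (Lp V r par lab P) \<subseteq> insert (Lp V r par lab P) (Rs V r par lab P ` F)"
  proof
    fix K assume "K \<in> NQ (Lp V r par lab P)"
    then obtain x where x: "K = Dq (Lp V r par lab P) x" "K \<noteq> {} \<or> x = []" unfolding NQ_def by blast
    show "K \<in> insert (Lp V r par lab P) (Rs V r par lab P ` F)"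
    proof (cases "x = []")
      case True then show ?thesis using x by simp
    next
      case False
      then have K: "K = Rs V r par lab P (Eset V r par lab x)" "K \<noteq> {}" using x Dq_Lp[of V r par lab P x] False by simp_all
      then have "Eset V r par lab x \<noteq> {}" unfolding Rs_def by auto
      then have "Eset V r par lab x \<in> F" unfolding F_def by blast
      then show ?thesis using K by blast
    qed
  qed
  have fin2: "finite (insert (Lp V r par lab P) (Rs V r par lab P ` F))" using finF by simp
  have "card (insert (Lp V r par lab P) (Rs V r par lab P ` F)) \<le> card (Rs V r par lab P ` F) + 1"
    using finF by (simp add: card_insert_if)
  also have "card (Rs V r par lab P ` F) \<le> card F" using finF by (rule card_image_le)
  finally have "card (insert (Lp V r par lab P) (Rs V r par lab P ` F)) \<le> 2 * card V + 1" using cF by linarith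
  moreover have "card (NQ (Lp V r par lab P)) \<le> card (insert (Lp V r par lab P) (Rs V r par lab P ` F))"
    using card_mono[OF fin2 sub] .
  ultimately show ?thesis using finite_subset[OF sub fin2] by linarith
qed

lemma Lp_lists: assumes "is_trie Alph V r par lab" shows "Lp V r par lab P \<subseteq> lists Alph"
proof
  fix s assume "s \<in> Lp V r par lab P"
  then obtain u w where "tpath V r par lab u w s" unfolding Lp_def by blast
  then show "s \<in> lists Alph" using tpath_lists assms by metis
qed

lemma upper_Lp:
  assumes "finite Alph" "is_trie Alph V r par lab" "minimal_dfa Alph (Lp V r par lab P) M"
  shows "real (ntrans M) \<le> 3 * real (card Alph) * real (card V)"
proof -
  have fV: "finite V" and rV: "r \<in> V" using assms(2) unfolding is_trie_def by auto
  have "card V > 0" using fV rV card_gt_0_iff by blast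
  then have nV: "card V \<ge> 1" by simp
  obtain fQ: "finite (NQ (Lp V r par lab P))" and cQ: "card (NQ (Lp V r par lab P)) \<le> 2 * card V + 1"
    using NQ_bound[OF fV] by blast
  have M0: "is_dfa Alph (mkdfa Alph (Lp V r par lab P)) \<and> dfa_lang (mkdfa Alph (Lp V r par lab P)) = Lp V r par lab P
     \<and> card (states (mkdfa Alph (Lp V r par lab P))) = card (NQ (Lp V r par lab P))"
    using mkdfa_ok[OF fQ Lp_lists[OF assms(2)]] .
  have "card (states M) \<le> card (states (mkdfa Alph (Lp V r par lab P)))"
    using assms(3) M0 unfolding minimal_dfa_def by blast
  then have cs: "card (states M) \<le> 3 * card V" using M0 cQ nV by linarith
  have "ntrans M \<le> card (states M) * card Alph"
    using ntrans_upper assms(1,3) unfolding minimal_dfa_def by blast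
  also have "\<dots> \<le> 3 * card V * card Alph" using cs by (rule mult_right_mono) simp
  finally have "ntrans M \<le> 3 * card Alph * card V" by (simp add: mult_ac)
  then have "real (ntrans M) \<le> real (3 * card Alph * card V)" by (simp only: of_nat_le_iff)
  then show ?thesis by simp
qed

lemma exists_Lp:
  assumes "is_trie Alph V r par lab"
  shows "\<exists>M. minimal_dfa Alph (Lp V r par lab P) M"
proof -
  have fV: "finite V" using assms unfolding is_trie_def by auto
  obtain fQ: "finite (NQ (Lp V r par lab P))" using NQ_bound[OF fV] by blast
  show ?thesis using mkdfa_ok[OF fQ Lp_lists[OF assms]] exists_minimal by blast
qed



lemma delta_star_append:
  "delta_star M q (x @ y) = (case delta_star M q x of None \<Rightarrow> None | Some q' \<Rightarrow> delta_star M q' y)"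
  by (induction x arbitrary: q) (auto split: option.splits)

lemma delta_star_states:
  assumes "is_dfa Alph M" shows "q \<in> states M \<Longrightarrow> delta_star M q w = Some q' \<Longrightarrow> q' \<in> states M"
proof (induction w arbitrary: q)
  case Nil then show ?case by simp
next
  case (Cons a w)
  then obtain p where p: "delta M q a = Some p" "delta_star M p w = Some q'" by (auto split: option.splits)
  then have "p \<in> states M" using assms Cons.prems(1) unfolding is_dfa_def by blast
  then show ?case using Cons.IH p(2) by blast
qed

lemma reach:
  assumes "dfa_lang M = L" "x @ y \<in> L"
  shows "\<exists>q. delta_star M (init M) x = Some q"
proof -
  from assms obtain q where "delta_star M (init M) (x @ y) = Some q" unfolding dfa_lang_def by blast
  then show ?thesis by (auto simp: delta_star_append split: option.splits)
qed

lemma same_state: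
  assumes "dfa_lang M = L" "delta_star M (init M) x = Some q" "delta_star M (init M) x' = Some q"
  shows "Dq L x = Dq L x'"
proof -
  have "\<And>y. x @ y \<in> L \<longleftrightarrow> x' @ y \<in> L"
  proof -
    fix y
    have "x @ y \<in> L \<longleftrightarrow> (\<exists>p. delta_star M q y = Some p \<and> p \<in> finals M)"
      using assms(1,2) unfolding dfa_lang_def by (auto simp: delta_star_append)
    moreover have "x' @ y \<in> L \<longleftrightarrow> (\<exists>p. delta_star M q y = Some p \<and> p \<in> finals M)"
      using assms(1,3) unfolding dfa_lang_def by (auto simp: delta_star_append)
    ultimately show "x @ y \<in> L \<longleftrightarrow> x' @ y \<in> L" by simp
  qed
  then show ?thesis unfolding Dq_def by simp
qed

lemma ntrans_lower:
  assumes dfa: "is_dfa Alph M" and lang: "dfa_lang M = L" and fA: "finite Alph"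
    and c1: "\<And>x a. (x, a) \<in> P \<Longrightarrow> \<exists>y. x @ [a] @ y \<in> L"
    and c2: "\<And>x a x'. (x, a) \<in> P \<Longrightarrow> (x', a) \<in> P \<Longrightarrow> Dq L x = Dq L x' \<Longrightarrow> x = x'"
    and fP: "finite P"
  shows "card P \<le> ntrans M"
proof -
  define h :: "'a list \<times> 'a \<Rightarrow> nat \<times> 'a" where "h = (\<lambda>(x, a). (the (delta_star M (init M) x), a))"
  define T where "T = {(q, a). q \<in> states M \<and> delta M q a \<noteq> None}"
  have st: "\<And>x a. (x, a) \<in> P \<Longrightarrow> \<exists>q p. delta_star M (init M) x = Some q \<and> delta M q a = Some p \<and> q \<in> states M"
  proof -
    fix x a assume xa: "(x, a) \<in> P"
    obtain y where "x @ [a] @ y \<in> L" using c1[OF xa] by blast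
    then have "(x @ [a]) @ y \<in> L" by simp
    then obtain q' where q': "delta_star M (init M) (x @ [a]) = Some q'" using reach[OF lang] by blast
    then obtain q where q: "delta_star M (init M) x = Some q"
      by (auto simp: delta_star_append split: option.splits)
    then obtain p where "delta M q a = Some p" using q' by (auto simp: delta_star_append split: option.splits)
    moreover have "q \<in> states M"
      using delta_star_states[OF dfa _ q] dfa unfolding is_dfa_def by blast
    ultimately show "\<exists>q p. delta_star M (init M) x = Some q \<and> delta M q a = Some p \<and> q \<in> states M"
      using q by blast
  qed
  have inj: "inj_on h P"
  proof (rule inj_onI)
    fix u v assume u: "u \<in> P" and v: "v \<in> P" and e: "h u = h v"
    obtain x a where xa: "u = (x, a)" by (cases u)
    obtain x' a' where xa': "v = (x', a')" by (cases v)
    obtain q p where q: "delta_star M (init M) x = Some q" using st u xa by blast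
    obtain q2 p2 where q2: "delta_star M (init M) x' = Some q2" using st v xa' by blast
    from e have "q = q2" "a = a'" using q q2 xa xa' unfolding h_def by auto
    then have "Dq L x = Dq L x'" using same_state[OF lang q] q2 by simp
    then have "x = x'" using c2 u v xa xa' \<open>a = a'\<close> by blast
    then show "u = v" using xa xa' \<open>a = a'\<close> by simp
  qed
  have sub: "h ` P \<subseteq> T"
  proof
    fix z assume "z \<in> h ` P"
    then obtain x a where xa: "(x, a) \<in> P" "z = h (x, a)" by auto
    from st[OF xa(1)] obtain q p where "delta_star M (init M) x = Some q" "delta M q a = Some p" "q \<in> states M"
      by blast
    then show "z \<in> T" using xa(2) unfolding h_def T_def by simp
  qed
  have fT: "finite T"
  proof -
    have "T \<subseteq> states M \<times> Alph" using dfa unfolding T_def is_dfa_def by auto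
    moreover have "finite (states M \<times> Alph)" using dfa fA unfolding is_dfa_def by simp
    ultimately show ?thesis by (rule finite_subset)
  qed
  have "card P = card (h ` P)" using card_image[OF inj] by simp
  also have "\<dots> \<le> card T" using card_mono[OF fT sub] .
  finally show ?thesis unfolding ntrans_def T_def .
qed



definition cpar :: "nat \<Rightarrow> nat \<Rightarrow> nat" where "cpar m v = (if v \<le> m then v - 1 else m)"
definition clab :: "nat \<Rightarrow> nat \<Rightarrow> nat" where "clab m v = (if v \<le> m then 0 else v - m)"

abbreviation "CT m s \<equiv> tpath {0..<Suc (m + s)} (0::nat) (cpar m) (clab m)"

lemma chain: "j \<le> k \<Longrightarrow> k \<le> m \<Longrightarrow> CT m s j k (replicate (k - j) 0)"
proof (induction k)
  case 0 then show ?case by (auto intro: tpath.refl)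
next
  case (Suc k)
  show ?case
  proof (cases "j = Suc k")
    case True then show ?thesis using Suc.prems by (auto intro: tpath.refl)
  next
    case False
    then have "j \<le> k" using Suc.prems by simp
    then have h: "CT m s j k (replicate (k - j) 0)" using Suc by simp
    have "cpar m (Suc k) = k" "clab m (Suc k) = 0" using Suc.prems by (auto simp: cpar_def clab_def)
    then have "CT m s j (Suc k) (replicate (k - j) 0 @ [clab m (Suc k)])"
      using tpath.step[of "{0..<Suc (m + s)}" 0 "cpar m" "clab m" j "Suc k"] h Suc.prems by simp
    moreover have "replicate (k - j) (0::nat) @ [0] = replicate (Suc k - j) 0"
      using \<open>j \<le> k\<close> by (simp add: Suc_diff_le replicate_append_same)
    ultimately show ?thesis using \<open>clab m (Suc k) = 0\<close> by simp
  qed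
qed

lemma fan: "1 \<le> c \<Longrightarrow> c \<le> s \<Longrightarrow> i \<le> m \<Longrightarrow> CT m s (m - i) (m + c) (replicate i 0 @ [c])"
proof -
  assume a: "1 \<le> c" "c \<le> s" "i \<le> m"
  have h: "CT m s (m - i) m (replicate i 0)" using chain[of "m - i" m m s] a by simp
  have "cpar m (m + c) = m" "clab m (m + c) = c" using a by (auto simp: cpar_def clab_def)
  then show ?thesis
    using tpath.step[of "{0..<Suc (m + s)}" 0 "cpar m" "clab m" "m - i" "m + c"] h a by simp
qed

lemma leaf_fan: "1 \<le> c \<Longrightarrow> c \<le> s \<Longrightarrow> is_leaf {0..<Suc (m + s)} 0 (cpar m) (m + c)"
  unfolding is_leaf_def cpar_def by auto

lemma leaf_m: "is_leaf {0..<Suc (m + 0)} 0 (cpar m) m"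
  unfolding is_leaf_def cpar_def by auto

lemma zeros: "CT m s u v w \<Longrightarrow> set w \<subseteq> {0} \<Longrightarrow> length w \<le> v \<and> (w \<noteq> [] \<longrightarrow> v \<le> m)"
proof (induction rule: tpath.induct)
  case (refl u) then show ?case by simp
next
  case (step u v w)
  then have "clab m v = 0" "v \<noteq> 0" by auto
  then have vm: "v \<le> m" by (auto simp: clab_def split: if_splits)
  then have "cpar m v = v - 1" by (simp add: cpar_def)
  then have "length w \<le> v - 1" using step by simp
  then show ?case using vm \<open>v \<noteq> 0\<close> by simp
qed

lemma zeros_Substr:
  assumes "replicate k 0 @ y \<in> Substr {0..<Suc (m + s)} 0 (cpar m) (clab m)"
  shows "k \<le> m"
proof -
  from assms obtain u w where h: "CT m s u w (replicate k 0 @ y)" unfolding Substr_def by blast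
  obtain v where "CT m s u v (replicate k 0)" using tpath_append2[OF h HOL.refl] by blast
  moreover have "set (replicate k (0::nat)) \<subseteq> {0}" by auto
  ultimately have "length (replicate k (0::nat)) \<le> v \<and> (replicate k (0::nat) \<noteq> [] \<longrightarrow> v \<le> m)"
    by (rule zeros)
  then show ?thesis by (cases k) auto
qed

lemma rep3: "replicate i x @ [x] @ replicate j x = replicate (i + 1 + j) x"
  by (induction i) auto

lemma funpow_cpar: "v \<le> m \<Longrightarrow> (cpar m ^^ k) v = v - k"
  by (induction k) (auto simp: cpar_def)

lemma ctrie:
  assumes "s < \<sigma>"
  shows "is_trie {0..<\<sigma>} {0..<Suc (m + s)} 0 (cpar m) (clab m)"
  unfolding is_trie_def
proof (intro conjI ballI impI)
  show "finite {0..<Suc (m + s)}" by simp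
  show "(0::nat) \<in> {0..<Suc (m + s)}" by simp
  fix v assume v: "v \<in> {0..<Suc (m + s)}"
  {
    assume "v \<noteq> 0"
    then show "cpar m v \<in> {0..<Suc (m + s)}" "clab m v \<in> {0..<\<sigma>}"
      using v assms by (auto simp: cpar_def clab_def)
  }
  show "\<exists>k. (cpar m ^^ k) v = 0"
  proof (cases "v \<le> m")
    case True then show ?thesis using funpow_cpar[OF True, of v] by auto
  next
    case False
    have "(cpar m ^^ Suc m) v = (cpar m ^^ m) (cpar m v)" by (simp only: funpow_Suc_right comp_apply)
    also have "\<dots> = (cpar m ^^ m) m" using False by (simp add: cpar_def)
    also have "\<dots> = 0" using funpow_cpar[of m m m] by simp
    finally show ?thesis by blast
  qed
next
  fix v w assume "v \<in> {0..<Suc (m + s)} - {0}" "w \<in> {0..<Suc (m + s)} - {0}" "cpar m v = cpar m w \<and> clab m v = clab m w"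
  then show "v = w" by (auto simp: cpar_def clab_def split: if_splits)
qed



lemma lower_concrete:
  fixes L :: "nat list set"
  assumes sub1: "Suffix {0..<Suc (m + s)} 0 (cpar m) (clab m) \<subseteq> L"
    and sub2: "L \<subseteq> Substr {0..<Suc (m + s)} 0 (cpar m) (clab m)"
    and dfa: "is_dfa Alph M" and lang: "dfa_lang M = L" and fA: "finite Alph"
  shows "(m + 1) * (s + 1) - 1 \<le> ntrans M"
proof -
  let ?V = "{0..<Suc (m + s)}"
  have full: "\<exists>y0. replicate m 0 @ y0 \<in> Suffix ?V 0 (cpar m) (clab m)"
  proof (cases "s = 0")
    case True
    have "CT m s 0 m (replicate m 0)" using chain[of 0 m m s] by simp
    moreover have "is_leaf ?V 0 (cpar m) m" using leaf_m[of m] True by simp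
    ultimately have "replicate m 0 @ [] \<in> Suffix ?V 0 (cpar m) (clab m)" unfolding Suffix_def by auto
    then show ?thesis by blast
  next
    case False
    have "CT m s (m - m) (m + 1) (replicate m 0 @ [1])" using fan[of 1 s m m] False by simp
    moreover have "is_leaf ?V 0 (cpar m) (m + 1)" using leaf_fan[of 1 s m] False by simp
    ultimately have "replicate m 0 @ [1] \<in> Suffix ?V 0 (cpar m) (clab m)" unfolding Suffix_def by auto
    then show ?thesis by blast
  qed
  then obtain y0 where y0: "replicate m 0 @ y0 \<in> L" using sub1 by blast
  define I where "I = {(i, c). i \<le> m \<and> c \<le> s} - {(m, 0::nat)}"
  define f :: "nat \<times> nat \<Rightarrow> nat list \<times> nat" where "f = (\<lambda>(i, c). (replicate i 0, c))"
  define P where "P = f ` I"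
  have c1: "\<exists>y. x @ [a] @ y \<in> L" if xa: "(x, a) \<in> P" for x a
  proof -
    from xa obtain i where i: "(i, a) \<in> I" "x = replicate i 0" unfolding P_def f_def by auto
    show ?thesis
    proof (cases "a = 0")
      case True
      then have im: "i < m" using i(1) unfolding I_def by auto
      have "x @ [a] @ (replicate (m - i - 1) 0 @ y0) = (replicate i 0 @ [0] @ replicate (m - i - 1) 0) @ y0"
        using i(2) True by simp
      also have "\<dots> = replicate (i + 1 + (m - i - 1)) 0 @ y0" by (simp only: rep3)
      also have "\<dots> = replicate m 0 @ y0" using im by simp
      finally show ?thesis using y0 by metis
    next
      case False
      have a: "1 \<le> a" "a \<le> s" "i \<le> m" using False i(1) unfolding I_def by auto
      have "CT m s (m - i) (m + a) (replicate i 0 @ [a])" using fan[OF a] .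
      moreover have "is_leaf ?V 0 (cpar m) (m + a)" using leaf_fan[OF a(1,2)] .
      ultimately have "replicate i 0 @ [a] \<in> Suffix ?V 0 (cpar m) (clab m)" unfolding Suffix_def by auto
      then have "x @ [a] @ [] \<in> L" using sub1 i(2) by auto
      then show ?thesis by blast
    qed
  qed
  have dist: "Dq L (replicate i 0) \<noteq> Dq L (replicate i' 0)" if ii: "i < i'" "i' \<le> m" for i i'
  proof
    assume eq: "Dq L (replicate i 0) = Dq L (replicate i' 0)"
    have e: "replicate i 0 @ (replicate (m - i) 0 @ y0) = replicate m 0 @ y0"
      using ii by (simp add: replicate_add[symmetric])
    have "replicate i 0 @ (replicate (m - i) 0 @ y0) \<in> L" by (subst e) (rule y0)
    then have "replicate (m - i) 0 @ y0 \<in> Dq L (replicate i 0)" by (simp only: Dq_def mem_Collect_eq)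
    then have "replicate i' 0 @ (replicate (m - i) 0 @ y0) \<in> L" using eq unfolding Dq_def by simp
    moreover have "replicate i' 0 @ (replicate (m - i) 0 @ y0) = replicate (i' + (m - i)) 0 @ y0"
      by (simp add: replicate_add)
    ultimately have "replicate (i' + (m - i)) 0 @ y0 \<in> Substr ?V 0 (cpar m) (clab m)" using sub2 by auto
    then have "i' + (m - i) \<le> m" by (rule zeros_Substr)
    then show False using ii by simp
  qed
  have c2: "x = x'" if h: "(x, a) \<in> P" "(x', a) \<in> P" "Dq L x = Dq L x'" for x x' a
  proof -
    from h(1) obtain i where i: "(i, a) \<in> I" "x = replicate i 0" unfolding P_def f_def by auto
    from h(2) obtain i' where i': "(i', a) \<in> I" "x' = replicate i' 0" unfolding P_def f_def by auto
    have "i \<le> m" "i' \<le> m" using i(1) i'(1) unfolding I_def by auto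
    have "\<not> i < i'" using dist[of i i'] \<open>i' \<le> m\<close> h(3) i(2) i'(2) by auto
    moreover have "\<not> i' < i" using dist[of i' i] \<open>i \<le> m\<close> h(3) i(2) i'(2) by auto
    ultimately show ?thesis using i(2) i'(2) by simp
  qed
  have IS: "I \<subseteq> {..m} \<times> {..s}" unfolding I_def by auto
  have fI: "finite I" using finite_subset[OF IS] by simp
  have fP: "finite P" unfolding P_def using fI by simp
  have injf: "inj_on f I"
    unfolding inj_on_def f_def by auto
  have "card P = card I" unfolding P_def using card_image[OF injf] .
  also have "card I = card ({..m} \<times> {..s}) - 1"
  proof -
    have "I = ({..m} \<times> {..s}) - {(m, 0)}" unfolding I_def by auto
    moreover have "(m, 0) \<in> {..m} \<times> {..s}" by simp
    ultimately show ?thesis by (simp add: card_Diff_singleton)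
  qed
  also have "\<dots> = (m + 1) * (s + 1) - 1" by (simp add: card_cartesian_product)
  finally have cP: "card P = (m + 1) * (s + 1) - 1" .
  have "card P \<le> ntrans M"
    by (rule ntrans_lower[OF dfa lang fA _ _ fP]) (use c1 c2 in blast)+
  then show ?thesis using cP by simp
qed



lemma Suffix_sub_Substr: "Suffix V r par lab \<subseteq> Substr V r par lab"
  unfolding Suffix_def Substr_def by auto

lemma arith_bound:
  fixes \<sigma> n :: nat
  assumes "2 \<le> n" "1 \<le> \<sigma>" "\<sigma> \<le> n" "s = min (\<sigma> - 1) (n div 2)" "m = n - 1 - s"
  shows "\<sigma> * n \<le> 8 * ((m + 1) * (s + 1) - 1)" and "Suc (m + s) = n" and "s < \<sigma>"
proof -
  have sn: "s \<le> n div 2" using assms(4) by simp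
  have n2: "n div 2 * 2 \<le> n" by simp
  show nn: "Suc (m + s) = n" using assms sn n2 by linarith
  show "s < \<sigma>" using assms(2,4) by simp
  have "2 * (n div 2) \<le> n" by simp
  then have "2 * s \<le> n" using sn by linarith
  then have A: "n \<le> 2 * (m + 1)" using nn by presburger
  have B: "\<sigma> \<le> 2 * (s + 1)"
  proof (cases "\<sigma> - 1 \<le> n div 2")
    case True then have "s = \<sigma> - 1" using assms(4) by simp
    then show ?thesis using assms(2) by simp
  next
    case False then have "s = n div 2" using assms(4) by simp
    moreover have "n \<le> n div 2 * 2 + 1" by simp
    ultimately show ?thesis using assms(3) by presburger
  qed
  have C: "\<sigma> * n \<le> (2 * (s + 1)) * (2 * (m + 1))" using mult_le_mono[OF B A] .
  have D: "(m + 1) * (s + 1) \<ge> 2"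
  proof -
    have "(m + 1) * (s + 1) = m + 1 + s + m * s" by (simp add: algebra_simps)
    then show ?thesis using nn assms(1) by linarith
  qed
  have E: "(2 * (s + 1)) * (2 * (m + 1)) = 4 * ((m + 1) * (s + 1))" by (simp add: algebra_simps)
  show "\<sigma> * n \<le> 8 * ((m + 1) * (s + 1) - 1)" using C D E by linarith
qed

definition mm :: "nat \<Rightarrow> nat \<Rightarrow> nat" where "mm \<sigma> n = n - 1 - min (\<sigma> - 1) (n div 2)"

theorem theorem7:
  shows
  "(\<exists>C::real. \<forall>(Alph::'a set) (V::'v set) r par lab M.
       finite Alph \<and> is_trie Alph V r par lab \<and> minimal_dfa Alph (Suffix V r par lab) M
       \<longrightarrow> real (ntrans M) \<le> C * real (card Alph) * real (card V))
 \<and> (\<exists>C::real. \<forall>(Alph::'a set) (V::'v set) r par lab M.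
       finite Alph \<and> is_trie Alph V r par lab \<and> minimal_dfa Alph (Substr V r par lab) M
       \<longrightarrow> real (ntrans M) \<le> C * real (card Alph) * real (card V))
 \<and> (\<exists>c::real. c > 0 \<and> (\<forall>\<sigma> n::nat. 2 \<le> n \<and> 1 \<le> \<sigma> \<and> \<sigma> \<le> n \<longrightarrow>
       (\<exists>(Alph::nat set) (V::nat set) r par lab.
          finite Alph \<and> card Alph = \<sigma> \<and> is_trie Alph V r par lab \<and> card V = n \<and>
          (\<exists>M. minimal_dfa Alph (Suffix V r par lab) M) \<and>
          (\<forall>M. minimal_dfa Alph (Suffix V r par lab) M
               \<longrightarrow> c * real \<sigma> * real n \<le> real (ntrans M)))))
 \<and> (\<exists>c::real. c > 0 \<and> (\<forall>\<sigma> n::nat. 2 \<le> n \<and> 1 \<le> \<sigma> \<and> \<sigma> \<le> n \<longrightarrow>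
       (\<exists>(Alph::nat set) (V::nat set) r par lab.
          finite Alph \<and> card Alph = \<sigma> \<and> is_trie Alph V r par lab \<and> card V = n \<and>
          (\<exists>M. minimal_dfa Alph (Substr V r par lab) M) \<and>
          (\<forall>M. minimal_dfa Alph (Substr V r par lab) M
               \<longrightarrow> c * real \<sigma> * real n \<le> real (ntrans M)))))"
proof (intro conjI)
  show "\<exists>C::real. \<forall>(Alph::'a set) (V::'v set) r par lab M.
       finite Alph \<and> is_trie Alph V r par lab \<and> minimal_dfa Alph (Suffix V r par lab) M
       \<longrightarrow> real (ntrans M) \<le> C * real (card Alph) * real (card V)"
    by (rule exI[of _ 3]) (auto simp: Suffix_Lp intro: upper_Lp)
  show "\<exists>C::real. \<forall>(Alph::'a set) (V::'v set) r par lab M.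
       finite Alph \<and> is_trie Alph V r par lab \<and> minimal_dfa Alph (Substr V r par lab) M
       \<longrightarrow> real (ntrans M) \<le> C * real (card Alph) * real (card V)"
    by (rule exI[of _ 3]) (auto simp: Substr_Lp intro: upper_Lp)
next
  have main: "is_trie {0..<\<sigma>} {0..<n} 0 (cpar (mm \<sigma> n)) (clab (mm \<sigma> n)) \<and>
          (\<exists>M. minimal_dfa {0..<\<sigma>} (Lp {0..<n} 0 (cpar (mm \<sigma> n)) (clab (mm \<sigma> n)) Q) M) \<and>
          (\<forall>M. minimal_dfa {0..<\<sigma>} (Lp {0..<n} 0 (cpar (mm \<sigma> n)) (clab (mm \<sigma> n)) Q) M
               \<longrightarrow> (1/8) * real \<sigma> * real n \<le> real (ntrans M))"
    if nb: "2 \<le> n" "1 \<le> \<sigma>" "\<sigma> \<le> n"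
      and Q: "Suffix {0..<n} 0 (cpar (mm \<sigma> n)) (clab (mm \<sigma> n)) \<subseteq> Lp {0..<n} 0 (cpar (mm \<sigma> n)) (clab (mm \<sigma> n)) Q"
             "Lp {0..<n} 0 (cpar (mm \<sigma> n)) (clab (mm \<sigma> n)) Q \<subseteq> Substr {0..<n} 0 (cpar (mm \<sigma> n)) (clab (mm \<sigma> n))"
    for \<sigma> n :: nat and Q
  proof -
    define s where "s = min (\<sigma> - 1) (n div 2)"
    define m where "m = n - 1 - s"
    have mm: "mm \<sigma> n = m" unfolding mm_def m_def s_def by simp
    note ab = arith_bound[OF nb s_def m_def]
    have Vn: "{0..<Suc (m + s)} = {0..<n}" using ab(2) by simp
    have tr: "is_trie {0..<\<sigma>} {0..<Suc (m + s)} 0 (cpar m) (clab m)" using ctrie[OF ab(3)] .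
    have s1: "Suffix {0..<Suc (m + s)} 0 (cpar m) (clab m) \<subseteq> Lp {0..<n} 0 (cpar m) (clab m) Q"
      using Q(1) Vn mm by simp
    have s2: "Lp {0..<n} 0 (cpar m) (clab m) Q \<subseteq> Substr {0..<Suc (m + s)} 0 (cpar m) (clab m)"
      using Q(2) Vn mm by simp
    have low: "(1/8) * real \<sigma> * real n \<le> real (ntrans M)"
      if M: "minimal_dfa {0..<\<sigma>} (Lp {0..<n} 0 (cpar m) (clab m) Q) M" for M
    proof -
      have "(m + 1) * (s + 1) - 1 \<le> ntrans M"
        using lower_concrete[OF s1 s2] M unfolding minimal_dfa_def by auto
      then have "\<sigma> * n \<le> 8 * ntrans M" using ab(1) by linarith
      then have "real (\<sigma> * n) \<le> real (8 * ntrans M)" by (simp only: of_nat_le_iff)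
      then show ?thesis by simp
    qed
    have ex: "\<exists>M. minimal_dfa {0..<\<sigma>} (Lp {0..<n} 0 (cpar m) (clab m) Q) M"
      using exists_Lp[OF tr] Vn by simp
    show ?thesis using tr Vn ex low mm by simp
  qed
  show "\<exists>c::real. c > 0 \<and> (\<forall>\<sigma> n::nat. 2 \<le> n \<and> 1 \<le> \<sigma> \<and> \<sigma> \<le> n \<longrightarrow>
       (\<exists>(Alph::nat set) (V::nat set) r par lab.
          finite Alph \<and> card Alph = \<sigma> \<and> is_trie Alph V r par lab \<and> card V = n \<and>
          (\<exists>M. minimal_dfa Alph (Suffix V r par lab) M) \<and>
          (\<forall>M. minimal_dfa Alph (Suffix V r par lab) M
               \<longrightarrow> c * real \<sigma> * real n \<le> real (ntrans M))))"
  proof (rule exI[of _ "1/8"], intro conjI allI impI)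
    fix \<sigma> n :: nat assume h: "2 \<le> n \<and> 1 \<le> \<sigma> \<and> \<sigma> \<le> n"
    have e: "Suffix {0..<n} 0 (cpar (mm \<sigma> n)) (clab (mm \<sigma> n)) = Lp {0..<n} 0 (cpar (mm \<sigma> n)) (clab (mm \<sigma> n)) (is_leaf {0..<n} 0 (cpar (mm \<sigma> n)))"
      by (rule Suffix_Lp)
    then have mn: "is_trie {0..<\<sigma>} {0..<n} 0 (cpar (mm \<sigma> n)) (clab (mm \<sigma> n)) \<and>
          (\<exists>M. minimal_dfa {0..<\<sigma>} (Suffix {0..<n} 0 (cpar (mm \<sigma> n)) (clab (mm \<sigma> n))) M) \<and>
          (\<forall>M. minimal_dfa {0..<\<sigma>} (Suffix {0..<n} 0 (cpar (mm \<sigma> n)) (clab (mm \<sigma> n))) M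
               \<longrightarrow> (1/8) * real \<sigma> * real n \<le> real (ntrans M))"
    proof -
      have q1: "Suffix {0..<n} 0 (cpar (mm \<sigma> n)) (clab (mm \<sigma> n)) \<subseteq> Lp {0..<n} 0 (cpar (mm \<sigma> n)) (clab (mm \<sigma> n)) (is_leaf {0..<n} 0 (cpar (mm \<sigma> n)))"
        using e Suffix_sub_Substr[of "{0..<n}" 0 "cpar (mm \<sigma> n)" "clab (mm \<sigma> n)"] by (simp add: Substr_Lp Suffix_Lp)
      have q2: "Lp {0..<n} 0 (cpar (mm \<sigma> n)) (clab (mm \<sigma> n)) (is_leaf {0..<n} 0 (cpar (mm \<sigma> n))) \<subseteq> Substr {0..<n} 0 (cpar (mm \<sigma> n)) (clab (mm \<sigma> n))"
        using e Suffix_sub_Substr[of "{0..<n}" 0 "cpar (mm \<sigma> n)" "clab (mm \<sigma> n)"] by (simp add: Substr_Lp Suffix_Lp)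
      have nb: "2 \<le> n" "1 \<le> \<sigma>" "\<sigma> \<le> n" using h by auto
      show ?thesis using main[OF nb q1 q2] e by simp
    qed
    show "\<exists>(Alph::nat set) (V::nat set) r par lab.
          finite Alph \<and> card Alph = \<sigma> \<and> is_trie Alph V r par lab \<and> card V = n \<and>
          (\<exists>M. minimal_dfa Alph (Suffix V r par lab) M) \<and>
          (\<forall>M. minimal_dfa Alph (Suffix V r par lab) M
               \<longrightarrow> 1/8 * real \<sigma> * real n \<le> real (ntrans M))"
      by (rule exI[of _ "{0..<\<sigma>}"], rule exI[of _ "{0..<n}"], rule exI[of _ 0], rule exI[of _ "cpar (mm \<sigma> n)"],
        rule exI[of _ "clab (mm \<sigma> n)"]) (use mn in simp)
  qed simp
  show "\<exists>c::real. c > 0 \<and> (\<forall>\<sigma> n::nat. 2 \<le> n \<and> 1 \<le> \<sigma> \<and> \<sigma> \<le> n \<longrightarrow>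
       (\<exists>(Alph::nat set) (V::nat set) r par lab.
          finite Alph \<and> card Alph = \<sigma> \<and> is_trie Alph V r par lab \<and> card V = n \<and>
          (\<exists>M. minimal_dfa Alph (Substr V r par lab) M) \<and>
          (\<forall>M. minimal_dfa Alph (Substr V r par lab) M
               \<longrightarrow> c * real \<sigma> * real n \<le> real (ntrans M))))"
  proof (rule exI[of _ "1/8"], intro conjI allI impI)
    fix \<sigma> n :: nat assume h: "2 \<le> n \<and> 1 \<le> \<sigma> \<and> \<sigma> \<le> n"
    have e: "Substr {0..<n} 0 (cpar (mm \<sigma> n)) (clab (mm \<sigma> n)) = Lp {0..<n} 0 (cpar (mm \<sigma> n)) (clab (mm \<sigma> n)) (\<lambda>_. True)"
      by (rule Substr_Lp)
    then have mn: "is_trie {0..<\<sigma>} {0..<n} 0 (cpar (mm \<sigma> n)) (clab (mm \<sigma> n)) \<and>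
          (\<exists>M. minimal_dfa {0..<\<sigma>} (Substr {0..<n} 0 (cpar (mm \<sigma> n)) (clab (mm \<sigma> n))) M) \<and>
          (\<forall>M. minimal_dfa {0..<\<sigma>} (Substr {0..<n} 0 (cpar (mm \<sigma> n)) (clab (mm \<sigma> n))) M
               \<longrightarrow> (1/8) * real \<sigma> * real n \<le> real (ntrans M))"
    proof -
      have q1: "Suffix {0..<n} 0 (cpar (mm \<sigma> n)) (clab (mm \<sigma> n)) \<subseteq> Lp {0..<n} 0 (cpar (mm \<sigma> n)) (clab (mm \<sigma> n)) (\<lambda>_. True)"
        using e Suffix_sub_Substr[of "{0..<n}" 0 "cpar (mm \<sigma> n)" "clab (mm \<sigma> n)"] by (simp add: Substr_Lp Suffix_Lp)
      have q2: "Lp {0..<n} 0 (cpar (mm \<sigma> n)) (clab (mm \<sigma> n)) (\<lambda>_. True) \<subseteq> Substr {0..<n} 0 (cpar (mm \<sigma> n)) (clab (mm \<sigma> n))"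
        using e Suffix_sub_Substr[of "{0..<n}" 0 "cpar (mm \<sigma> n)" "clab (mm \<sigma> n)"] by (simp add: Substr_Lp Suffix_Lp)
      have nb: "2 \<le> n" "1 \<le> \<sigma>" "\<sigma> \<le> n" using h by auto
      show ?thesis using main[OF nb q1 q2] e by simp
    qed
    show "\<exists>(Alph::nat set) (V::nat set) r par lab.
          finite Alph \<and> card Alph = \<sigma> \<and> is_trie Alph V r par lab \<and> card V = n \<and>
          (\<exists>M. minimal_dfa Alph (Substr V r par lab) M) \<and>
          (\<forall>M. minimal_dfa Alph (Substr V r par lab) M
               \<longrightarrow> 1/8 * real \<sigma> * real n \<le> real (ntrans M))"
      by (rule exI[of _ "{0..<\<sigma>}"], rule exI[of _ "{0..<n}"], rule exI[of _ 0], rule exI[of _ "cpar (mm \<sigma> n)"],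
        rule exI[of _ "clab (mm \<sigma> n)"]) (use mn in simp)
  qed simp
qed

end
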